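(* Let $u^1=u^{1j}e_j$, $u^2=u^{2j}e_j$ be $\mathfrak g$-valued matrix functions satisfying the system $$\Delta^j\equiv u^{1j}_2-u^{2j}_1+u^{1k}u^{2l}c^j_{kl}=0,\qquad j=1,\dots,s$$ (in matrix form $\Delta\equiv D_2u^1-D_1u^2+[u^1,u^2]=0$), and let $\Phi[u]$, with values in $G$, be a solution of the linear spectral problem (LSP) $D_\alpha\Phi=u^\alpha\Phi$, $\alpha=1,2$. Let $$\vec v=\sum_{i=1}^3\xi^i[u]\frac{\partial}{\partial x^i}+\sum_{\alpha=1}^2\sum_{j=1}^s\phi^j_\alpha[u]\frac{\partial}{\partial u^{\alpha j}}$$ be a generalized vector field, with evolutionary form $\vec v_Q=\sum_{\alpha,j}Q^j_\alpha[u]\,\partial/\partial u^{\alpha j}$, where $Q^j_\alpha=\phi^j_\alpha-\xi^i u^{\alpha j}_i$, and put $Q_\alpha=Q^j_\alpha e_j\in\mathfrak g$. Then the following are equivalent: (1) $\vec v$ is a generalized symmetry of $\Delta^j=0$; (2) there exists a $\mathfrak g$-valued immersion function $\widetilde F(x^i)=F[u]$ with tangent vectors $\partial\widetilde F/\partial x^\alpha=D_\alpha F[u]=\Phi^{-1}Q_\alpha[u]\Phi$, $\alpha=1,2$; (3) there exists a matrix function $\Psi$ such that the infinitesimal deformation $(u^1,u^2,\Phi)\mapsto(u^1,u^2,\Phi)+\epsilon(Q_1[u],Q_2[u],\Psi)$ is a generalized infinitesimal symmetry of the system $\Delta^j=0$ together with its LSP. Furthermore, if (2) holds then $\Psi=\Phi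 F$ is an admissible infinitesimal deformation of $\Phi$ (i.e. it works in (3)), and if (3) holds then $F=\Phi^{-1}\Psi$ has tangent vectors $D_\alpha F=\Phi^{-1}Q_\alpha\Phi$, $\alpha=1,2$.
   Context: $G$ is a matrix Lie group with Lie algebra $\mathfrak g$ having basis $e_1,\dots,e_s$ and structure constants $[e_k,e_l]=c^j_{kl}e_j$ (repeated indices summed). Independent variables are $x^1,x^2,x^3$ ($x^3=\lambda$ is the spectral parameter); dependent variables are $u^{\alpha j}$, $\alpha=1,2$, $j=1,\dots,s$, with $u^\alpha=u^{\alpha j}e_j$. For a multi-index $J=(j_1,\dots,j_n)$ with $j_k\in\{1,2,3\}$, $u^{\alpha j}_J$ denotes the corresponding partial derivative (jet coordinate); $f[u]$ denotes a function of $x^i$ and finitely many $u^{\alpha j}_J$, and $\widetilde f(x^i)$ its value on a given solution. The total derivatives are $D_i=\partial/\partial x^i+u^{\alpha j}_{J,i}\,\partial/\partial u^{\alpha j}_J$, $D_{J,i}=D_iD_J$. The wave function $\Phi=\Phi[u]$ may depend on $x^i$ and on the jets of $u$. The system $\Delta^j=0$ is assumed nondegenerate. The prolongation of $\vec v_Q$ is $\mathrm{pr}\,\vec v_Q=\sum_J D_JQ^j_\alpha\,\partial/\partial u^{\alpha j}_J$. The vector field $\vec v$ is a generalized symmetry of $\Delta^j=0$ iff $\mathrm{pr}\,\vec v_Q(\Delta)=D_2Q_1-D_1Q_2+[Q_1,u^2]+[u^1,Q_2]=0$ whenever $\Delta=0$. The deformation $(u^1,u^2,\Phi)\mapsto(u^1,u^2,\Phi)+\epsilon(Q_1,Q_2,\Psi)$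 is called a generalized infinitesimal symmetry of the system together with its LSP if $\mathrm{pr}\,\vec v_Q(\Delta)=0$ on solutions of $\Delta=0$, $\Phi+\epsilon\Psi$ lies in $G$ to first order in $\epsilon$ (i.e. $\Phi^{-1}\Psi\in\mathfrak g$), and $D_\alpha\Psi=u^\alpha\Psi+Q_\alpha\Phi$ for $\alpha=1,2$. An immersion function with given tangent vectors is a $\mathfrak g$-valued function whose derivatives $D_1F,D_2F$ are the prescribed ones (determined up to an additive constant). *)

theory Defs
  imports "HOL-Analysis.Analysis"
begin

type_synonym 'n cmat = "complex^'n^'n"

text \<open>Matrix Lie group: a subgroup of GL(n,C) that is closed in GL(n,C).\<close>
definition matrix_Lie_group :: "'n::finite cmat set \<Rightarrow> bool" where
  "matrix_Lie_group G \<longleftrightarrow>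
     G \<subseteq> {A. invertible A} \<and> mat 1 \<in> G \<and>
     (\<forall>A\<in>G. \<forall>B\<in>G. A ** B \<in> G) \<and> (\<forall>A\<in>G. matrix_inv A \<in> G) \<and>
     closedin (top_of_set {A. invertible A}) G"

text \<open>Lie algebra of a matrix Lie group: tangent vectors at the identity of
  curves in G (a real vector space of matrices).\<close>
definition lie_algebra :: "'n::finite cmat set \<Rightarrow> 'n cmat set" where
  "lie_algebra G = {X. \<exists>\<gamma>::real \<Rightarrow> 'n cmat. (\<forall>t. \<gamma> t \<in> G) \<and> \<gamma> 0 = mat 1 \<and>
                          (\<gamma> has_vector_derivative X) (at 0)}"

definition lie_bracket :: "'n::finite cmat \<Rightarrow> 'n cmat \<Rightarrow> 'n cmat" where
  "lie_bracket A B = A ** B - B ** A"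

text \<open>Partial derivative in the direction x^i of a function of (x^1,x^2,x^3).\<close>
definition has_partial ::
  "3 \<Rightarrow> (real^3 \<Rightarrow> 'a::real_normed_vector) \<Rightarrow> real^3 \<Rightarrow> 'a \<Rightarrow> bool" where
  "has_partial i f x D \<longleftrightarrow> ((\<lambda>t. f (x + t *\<^sub>R axis i 1)) has_vector_derivative D) (at 0)"

definition partial :: "3 \<Rightarrow> (real^3 \<Rightarrow> 'a::real_normed_vector) \<Rightarrow> real^3 \<Rightarrow> 'a" where
  "partial i f x = vector_derivative (\<lambda>t. f (x + t *\<^sub>R axis i 1)) (at 0)"

text \<open>Continuously (Frechet) differentiable on all of R^3.\<close>
definition C1 :: "(real^3 \<Rightarrow> 'a::real_normed_vector) \<Rightarrow> bool" where
  "C1 f \<longleftrightarrow> (\<forall>x. f differentiable at x) \<and>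
            continuous_on UNIV (\<lambda>x. frechet_derivative f (at x))"

text \<open>The linearized system pr v_Q(Delta) = 0 evaluated on the solution (u1,u2).\<close>
definition sym_condition ::
  "(real^3 \<Rightarrow> 'n::finite cmat) \<Rightarrow> (real^3 \<Rightarrow> 'n cmat) \<Rightarrow>
   (real^3 \<Rightarrow> 'n cmat) \<Rightarrow> (real^3 \<Rightarrow> 'n cmat) \<Rightarrow> bool" where
  "sym_condition u1 u2 Q1 Q2 \<longleftrightarrow>
     (\<forall>x. partial 2 Q1 x - partial 1 Q2 x + lie_bracket (Q1 x) (u2 x)
           + lie_bracket (u1 x) (Q2 x) = 0)"

end

theory Submission
  imports Defs
begin


lemma bilinear_mm: "bilinear (\<lambda>(A::'n::finite cmat) B. A ** B)"
  unfolding bilinear_def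
  by (auto simp: linear_iff vec_eq_iff
      matrix_matrix_mult_def sum.distrib scaleR_sum_right algebra_simps)

lemma bb_mm: "bounded_bilinear (\<lambda>(A::'n::finite cmat) B. A ** B)"
  using bilinear_mm bilinear_conv_bounded_bilinear by blast

lemma FDERIV_cont:
  assumes bb: "bounded_bilinear B"
    and L: "continuous (at x within s) L" and g: "(g has_derivative g') (at x within s)"
    and g0: "g x = 0"
  shows "((\<lambda>x. B (L x) (g x)) has_derivative (\<lambda>h. B (L x) (g' h))) (at x within s)"
proof -
  interpret bounded_bilinear B by fact
  from bounded_linear.bounded [OF has_derivative_bounded_linear [OF g]]
  obtain KG where norm_G: "\<And>x. norm (g' x) \<le> norm x * KG" by fast
  from pos_bounded obtain K
    where K: "0 < K" and norm_prod: "\<And>a b. norm (B a b) \<le> norm a * norm b * K"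
    by fast
  let ?D = "\<lambda>f f' y. f y - f x - f' (y - x)"
  let ?N = "\<lambda>f f' y. norm (?D f f' y) / norm (y - x)"
  define Ng where "Ng = ?N g g'"
  let ?fun1 = "\<lambda>y. norm (B (L y) (g y) - B (L x) (g x) - B (L x) (g' (y - x))) / norm (y - x)"
  let ?fun2 = "\<lambda>y. norm (L x) * Ng y * K + norm (L y - L x) * (Ng y + abs KG) * K"
  let ?F = "at x within s"
  show ?thesis
  proof (rule has_derivativeI_sandwich[of 1])
    show "bounded_linear (\<lambda>h. B (L x) (g' h))"
      by (intro bounded_linear_compose [OF bounded_linear_right] has_derivative_bounded_linear [OF g])
  next
    from L have "(L \<longlongrightarrow> L x) ?F"
      by (simp add: continuous_within)
    moreover from g have "(Ng \<longlongrightarrow> 0) ?F"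
      by (simp_all add: has_derivative_iff_norm Ng_def)
    ultimately have "(?fun2 \<longlongrightarrow> norm (L x) * 0 * K + norm (L x - L x) * (0 + abs KG) * K) ?F"
      by (intro tendsto_intros) (simp_all add: LIM_zero_iff)
    then show "(?fun2 \<longlongrightarrow> 0) ?F"
      by simp
  next
    fix y
    assume "y \<noteq> x"
    then have ny: "norm (y - x) > 0" by simp
    have e: "B (L y) (g y) - B (L x) (g x) - B (L x) (g' (y - x)) = B (L x) (?D g g' y) + B (L y - L x) (g y - g x)"
      using g0 by (simp add: diff_left diff_right add_left add_right zero_right field_simps)
    have b1: "norm (g y - g x) \<le> (Ng y + abs KG) * norm (y - x)"
    proof -
      have "norm (g y - g x) \<le> norm (?D g g' y) + norm (g' (y - x))"
        using norm_triangle_ineq[of "?D g g' y" "g' (y - x)"] by simp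
      also have "norm (?D g g' y) = Ng y * norm (y - x)" using ny by (simp add: Ng_def)
      also have "norm (g' (y - x)) \<le> abs KG * norm (y - x)"
        using norm_G[of "y - x"] by (smt (verit) mult.commute mult_right_mono norm_ge_zero)
      finally show ?thesis by (simp add: algebra_simps)
    qed
    have "norm (B (L y) (g y) - B (L x) (g x) - B (L x) (g' (y - x))) \<le>
        norm (L x) * norm (?D g g' y) * K + norm (L y - L x) * norm (g y - g x) * K"
      unfolding e
      by (intro order_trans [OF norm_triangle_ineq add_mono] norm_prod)
    also have "\<dots> \<le> norm (L x) * (Ng y * norm (y - x)) * K + norm (L y - L x) * ((Ng y + abs KG) * norm (y - x)) * K"
      using ny K b1 by (intro add_mono mult_right_mono mult_left_mono) (auto simp: Ng_def)
    also have "\<dots> = ?fun2 y * norm (y - x)" by (simp add: algebra_simps)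
    finally show "?fun1 y \<le> ?fun2 y" using ny by (simp add: divide_le_eq)
  qed simp
qed

lemma inv_has_derivative:
  fixes \<Phi> W :: "'a::real_normed_vector \<Rightarrow> 'n::finite cmat"
  assumes D: "(\<Phi> has_derivative \<Phi>') (at x)" and C: "continuous (at x) W"
    and l: "\<And>y. W y ** \<Phi> y = mat 1" and r: "\<Phi> x ** W x = mat 1"
  shows "(W has_derivative (\<lambda>v. - (W x ** (\<Phi>' v ** W x)))) (at x)"
proof -
  have eq: "W y = W x - W y ** ((\<Phi> y - \<Phi> x) ** W x)" for y
  proof -
    have "W y ** ((\<Phi> y - \<Phi> x) ** W x) = (W y ** \<Phi> y) ** W x - W y ** (\<Phi> x ** W x)"
      by (simp add: matrix_mul_assoc bounded_bilinear.diff_left[OF bb_mm] bounded_bilinear.diff_right[OF bb_mm])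
    also have "\<dots> = W x - W y" by (simp add: l r)
    finally show ?thesis by simp
  qed
  have g: "((\<lambda>y. (\<Phi> y - \<Phi> x) ** W x) has_derivative (\<lambda>v. \<Phi>' v ** W x)) (at x)"
    using bounded_bilinear.FDERIV[OF bb_mm, of "\<lambda>y. \<Phi> y - \<Phi> x" "\<lambda>v. \<Phi>' v" x UNIV "\<lambda>_. W x" "\<lambda>_. 0"]
      has_derivative_diff[OF D has_derivative_const, of "\<Phi> x"] by (auto simp: bounded_bilinear.zero_right[OF bb_mm])
  have "((\<lambda>y. W x - W y ** ((\<Phi> y - \<Phi> x) ** W x)) has_derivative (\<lambda>v. 0 - W x ** (\<Phi>' v ** W x))) (at x)"
    by (intro has_derivative_diff has_derivative_const FDERIV_cont[OF bb_mm C g]) simp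
  then show ?thesis using eq by (simp add: eq[symmetric])
qed

lemma matrix_inv_lr:
  assumes "invertible (A::'a::semiring_1^'n^'n)"
  shows "A ** matrix_inv A = mat 1" "matrix_inv A ** A = mat 1"
  using assms unfolding invertible_def matrix_inv_def by (metis (mono_tags, lifting) someI_ex)+

lemma la_zero: "matrix_Lie_group G \<Longrightarrow> 0 \<in> lie_algebra G"
  unfolding lie_algebra_def matrix_Lie_group_def
  by (rule CollectI, rule exI[of _ "\<lambda>_. mat 1"]) auto

lemma la_add:
  assumes G: "matrix_Lie_group G" and X: "X \<in> lie_algebra G" and Y: "Y \<in> lie_algebra G"
  shows "X + Y \<in> lie_algebra G"
proof -
  obtain g1 where g1: "\<forall>t. g1 t \<in> G" "g1 0 = mat 1" "(g1 has_vector_derivative X) (at 0)"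
    using X unfolding lie_algebra_def by blast
  obtain g2 where g2: "\<forall>t. g2 t \<in> G" "g2 0 = mat 1" "(g2 has_vector_derivative Y) (at 0)"
    using Y unfolding lie_algebra_def by blast
  have "((\<lambda>t. g1 t ** g2 t) has_vector_derivative (g1 0 ** Y + X ** g2 0)) (at 0)"
    by (rule bounded_bilinear.has_vector_derivative[OF bb_mm g1(3) g2(3)])
  then show ?thesis unfolding lie_algebra_def using g1 g2 G unfolding matrix_Lie_group_def
    by (intro CollectI exI[of _ "\<lambda>t. g1 t ** g2 t"]) (auto simp: add.commute)
qed

lemma la_scale:
  assumes G: "matrix_Lie_group G" and X: "X \<in> lie_algebra G"
  shows "c *\<^sub>R X \<in> lie_algebra G"
proof -
  obtain g1 where g1: "\<forall>t. g1 t \<in> G" "g1 0 = mat 1" "(g1 has_vector_derivative X) (at 0)"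
    using X unfolding lie_algebra_def by blast
  have d: "((\<lambda>t::real. c * t) has_vector_derivative c) (at 0)"
  proof -
    have "((\<lambda>t::real. c * t) has_real_derivative c) (at 0)"
      by (auto intro!: derivative_eq_intros)
    then show ?thesis by (simp add: has_real_derivative_iff_has_vector_derivative)
  qed
  have "((g1 \<circ> (\<lambda>t. c * t)) has_vector_derivative (c *\<^sub>R X)) (at 0)"
    by (rule vector_diff_chain_at[OF d]) (simp add: g1)
  then show ?thesis unfolding lie_algebra_def using g1
    by (intro CollectI exI[of _ "\<lambda>t. g1 (c * t)"]) (auto simp: o_def)
qed

lemma la_subspace: "matrix_Lie_group G \<Longrightarrow> subspace (lie_algebra G)"
  unfolding subspace_def using la_zero la_add la_scale by blast

lemma la_Ad:
  assumes G: "matrix_Lie_group G" and X: "X \<in> lie_algebra G" and g: "g \<in> G"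
  shows "matrix_inv g ** X ** g \<in> lie_algebra G"
proof -
  obtain g1 where g1: "\<forall>t. g1 t \<in> G" "g1 0 = mat 1" "(g1 has_vector_derivative X) (at 0)"
    using X unfolding lie_algebra_def by blast
  have inv: "invertible g" "matrix_inv g \<in> G" using G g unfolding matrix_Lie_group_def by auto
  have d1: "((\<lambda>t. matrix_inv g ** g1 t) has_vector_derivative (matrix_inv g ** X + 0 ** g1 0)) (at 0)"
    by (rule bounded_bilinear.has_vector_derivative[OF bb_mm has_vector_derivative_const g1(3)])
  have d2: "((\<lambda>t. matrix_inv g ** g1 t ** g) has_vector_derivative ((matrix_inv g ** g1 0) ** 0 + (matrix_inv g ** X + 0 ** g1 0) ** g)) (at 0)"
    by (rule bounded_bilinear.has_vector_derivative[OF bb_mm d1 has_vector_derivative_const])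
  have z: "(0::'a cmat) ** A = 0" "A ** (0::'a cmat) = 0" for A :: "'a::finite cmat"
    using bounded_bilinear.zero_left[OF bb_mm] bounded_bilinear.zero_right[OF bb_mm] by auto
  have "((\<lambda>t. matrix_inv g ** g1 t ** g) has_vector_derivative (matrix_inv g ** X ** g)) (at 0)"
    using d2 by (simp add: z)
  moreover have "\<forall>t. matrix_inv g ** g1 t ** g \<in> G" using G g1 g inv unfolding matrix_Lie_group_def by auto
  moreover have "matrix_inv g ** g1 0 ** g = mat 1" using g1 matrix_inv_lr(2)[OF inv(1)] by simp
  ultimately show ?thesis unfolding lie_algebra_def
    by (intro CollectI exI[of _ "\<lambda>t. matrix_inv g ** g1 t ** g"]) blast
qed

lemma matrix_inv_cramer:
  fixes A :: "complex^'n::finite^'n"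
  assumes "invertible A"
  shows "matrix_inv A = (\<chi> k j. det (\<chi> i l. if l = k then axis j 1 $ i else A$i$l) / det A)"
proof -
  have d: "det A \<noteq> 0" using assms invertible_det_nz by blast
  have "matrix_inv A $ k $ j = det (\<chi> i l. if l = k then axis j 1 $ i else A$i$l) / det A" for k j
  proof -
    let ?x = "matrix_inv A *v axis j 1"
    have "A *v ?x = axis j 1"
      by (simp add: matrix_vector_mul_assoc matrix_inv_lr(1)[OF assms])
    then have "?x = (\<chi> k. det (\<chi> i l. if l = k then axis j 1 $ i else A$i$l) / det A)"
      using cramer[OF d] by blast
    then have "?x $ k = det (\<chi> i l. if l = k then axis j 1 $ i else A$i$l) / det A" by simp
    moreover have "?x $ k = matrix_inv A $ k $ j"
      by (simp add: matrix_vector_mult_def axis_def if_distrib cong: if_cong)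
    ultimately show ?thesis by simp
  qed
  then show ?thesis by (simp add: vec_eq_iff)
qed

lemma cont_det: "continuous_on S f \<Longrightarrow> continuous_on S (\<lambda>y. det (f y :: complex^'n::finite^'n))"
  unfolding det_def by (intro continuous_intros)

lemma cont_matrix_inv:
  fixes \<Phi> :: "'a::topological_space \<Rightarrow> complex^'n::finite^'n"
  assumes c: "continuous_on S \<Phi>" and i: "\<And>y. y \<in> S \<Longrightarrow> invertible (\<Phi> y)"
  shows "continuous_on S (\<lambda>y. matrix_inv (\<Phi> y))"
proof -
  have cM: "continuous_on S (\<lambda>y. det (\<chi> i l. if l = k then axis j 1 $ i else \<Phi> y $i$l))" for k j :: 'n
  proof (rule cont_det)
    show "continuous_on S (\<lambda>y. \<chi> i l. if l = k then axis j 1 $ i else \<Phi> y $i$l)"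
    proof (intro continuous_on_vec_lambda)
      fix i l show "continuous_on S (\<lambda>y. if l = k then axis j 1 $ i else \<Phi> y $i$l)"
        by (cases "l = k") (auto intro!: continuous_intros c)
    qed
  qed
  have "continuous_on S (\<lambda>y. (\<chi> k j. det (\<chi> i l. if l = k then axis j 1 $ i else \<Phi> y$i$l) / det (\<Phi> y)))"
    using i invertible_det_nz
    by (intro continuous_on_vec_lambda continuous_on_divide cM cont_det c) auto
  then show ?thesis
    by (rule continuous_on_cong[THEN iffD1, rotated 2]) (auto simp: matrix_inv_cramer i)
qed



lemma line_deriv:
  assumes "(f has_derivative f') (at (y + t0 *\<^sub>R v))"
  shows "((\<lambda>t. f (y + t *\<^sub>R v)) has_vector_derivative f' v) (at t0)"
proof -
  have l: "((\<lambda>t. y + t *\<^sub>R v) has_derivative (\<lambda>t. t *\<^sub>R v)) (at t0)"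
    by (auto intro!: derivative_eq_intros)
  have "((\<lambda>t. f (y + t *\<^sub>R v)) has_derivative (\<lambda>t. f' (t *\<^sub>R v))) (at t0)"
    by (rule has_derivative_compose[OF l assms])
  moreover have "f' (t *\<^sub>R v) = t *\<^sub>R f' v" for t
    using has_derivative_bounded_linear[OF assms] by (simp add: linear_simps)
  ultimately show ?thesis by (simp add: has_vector_derivative_def)
qed

lemma hp_shift:
  assumes "has_partial i F y D"
  shows "((\<lambda>\<tau>. F (y + (\<tau> - \<tau>0) *\<^sub>R axis i 1)) has_vector_derivative D) (at \<tau>0)"
proof -
  have d: "((\<lambda>\<tau>::real. \<tau> - \<tau>0) has_vector_derivative 1) (at \<tau>0)"
    by (auto intro!: derivative_eq_intros)
  have "(((\<lambda>h. F (y + h *\<^sub>R axis i 1)) \<circ> (\<lambda>\<tau>. \<tau> - \<tau>0)) has_vector_derivative (1 *\<^sub>R D)) (at \<tau>0)"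
    by (rule vector_diff_chain_at[OF d]) (use assms in \<open>simp add: has_partial_def\<close>)
  then show ?thesis by (simp add: o_def)
qed

lemma schwarz:
  fixes F A1 A2 :: "real^3 \<Rightarrow> 'v::euclidean_space"
  assumes hp1: "\<And>x. has_partial 1 F x (A1 x)" and hp2: "\<And>x. has_partial 2 F x (A2 x)"
    and d1: "\<And>x. (A1 has_derivative A1' x) (at x)" and d2: "\<And>x. (A2 has_derivative A2' x) (at x)"
    and c1: "\<And>v. continuous_on UNIV (\<lambda>x. A1' x v)"
  shows "A1' x (axis 2 1) = A2' x (axis 1 1)"
proof -
  define e1 :: "real^3" where "e1 = axis 1 1"
  define e2 :: "real^3" where "e2 = axis 2 1"
  define p where "p s t = x + s *\<^sub>R e1 + t *\<^sub>R e2" for s t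
  have contA1: "continuous_on UNIV A1"
    using d1 by (meson continuous_at_imp_continuous_on differentiableI differentiable_imp_continuous_within)
  have cp: "continuous_on S (\<lambda>z. p (f z) (g z))" if "continuous_on S f" "continuous_on S g" for S f g
    unfolding p_def using that by (intro continuous_intros)
  \<comment> \<open>(a)\<close>
  have FTC1: "F (p s t) - F (p 0 t) = integral {0..s} (\<lambda>\<tau>. A1 (p \<tau> t))" if s: "0 \<le> s" for s t
  proof -
    have "((\<lambda>\<tau>. F (p \<tau> t)) has_vector_derivative A1 (p \<tau> t)) (at \<tau> within {0..s})" for \<tau>
    proof -
      have "((\<lambda>\<tau>'. F (p \<tau> t + (\<tau>' - \<tau>) *\<^sub>R axis 1 1)) has_vector_derivative A1 (p \<tau> t)) (at \<tau>)"
        by (rule hp_shift[OF hp1])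
      moreover have "p \<tau> t + (\<tau>' - \<tau>) *\<^sub>R axis 1 1 = p \<tau>' t" for \<tau>'
        by (simp add: p_def e1_def algebra_simps)
      ultimately show ?thesis by (simp add: has_vector_derivative_at_within)
    qed
    then have "((\<lambda>\<tau>. A1 (p \<tau> t)) has_integral (F (p s t) - F (p 0 t))) {0..s}"
      by (intro fundamental_theorem_of_calculus s)
    then show ?thesis by (simp add: integral_unique)
  qed
  \<comment> \<open>(b)\<close>
  have IB: "A2 (p s 0) - A2 (p 0 0) = integral {0..s} (\<lambda>\<tau>. A1' (p \<tau> 0) e2)" if s: "0 \<le> s" for s
  proof -
    have L: "((\<lambda>t. F (p s t) - F (p 0 t)) has_vector_derivative (A2 (p s 0) - A2 (p 0 0))) (at 0)"
    proof -
      have "((\<lambda>t. F (p s 0 + (t - 0) *\<^sub>R axis 2 1)) has_vector_derivative A2 (p s 0)) (at 0)"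
        "((\<lambda>t. F (p 0 0 + (t - 0) *\<^sub>R axis 2 1)) has_vector_derivative A2 (p 0 0)) (at 0)"
        by (rule hp_shift[OF hp2])+
      moreover have "p a 0 + (t - 0) *\<^sub>R axis 2 1 = p a t" for a t
        by (simp add: p_def e2_def)
      ultimately show ?thesis by (auto intro!: derivative_eq_intros)
    qed
    have R: "((\<lambda>t. integral (cbox 0 s) (\<lambda>\<tau>. A1 (p \<tau> t))) has_vector_derivative
              integral (cbox 0 s) (\<lambda>\<tau>. A1' (p \<tau> 0) e2)) (at 0 within UNIV)"
    proof (rule leibniz_rule_vector_derivative[where fx="\<lambda>t \<tau>. A1' (p \<tau> t) e2"])
      fix t \<tau> :: real
      have "((\<lambda>t. A1 ((x + \<tau> *\<^sub>R e1) + t *\<^sub>R e2)) has_vector_derivative A1' (p \<tau> t) e2) (at t)"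
        by (rule line_deriv) (simp add: d1 p_def)
      then show "((\<lambda>t. A1 (p \<tau> t)) has_vector_derivative A1' (p \<tau> t) e2) (at t within UNIV)"
        by (simp add: p_def)
    next
      fix t :: real
      show "(\<lambda>\<tau>. A1 (p \<tau> t)) integrable_on cbox 0 s"
        by (rule integrable_continuous) (intro continuous_on_compose2[OF contA1] cp continuous_intros, auto)
    next
      show "continuous_on (UNIV \<times> cbox 0 s) (\<lambda>(t, \<tau>). A1' (p \<tau> t) e2)"
      proof -
        have "continuous_on (UNIV \<times> cbox 0 s) (\<lambda>z. A1' (p (snd z) (fst z)) e2)"
          by (rule continuous_on_compose2[OF c1[of e2] cp]) (simp_all add: continuous_on_fst[OF continuous_on_id] continuous_on_snd[OF continuous_on_id])
        then show ?thesis by (simp add: split_beta)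
      qed
    qed auto
    have "\<And>t. integral (cbox 0 s) (\<lambda>\<tau>. A1 (p \<tau> t)) = F (p s t) - F (p 0 t)"
      using FTC1[OF s] by simp
    with R have "((\<lambda>t. F (p s t) - F (p 0 t)) has_vector_derivative
              integral {0..s} (\<lambda>\<tau>. A1' (p \<tau> 0) e2)) (at 0)" by simp
    from vector_derivative_unique_at[OF L this] show ?thesis .
  qed
  \<comment> \<open>(c)\<close>
  have g1: "((\<lambda>s. A2 (p s 0) - A2 (p 0 0)) has_vector_derivative A2' x e1) (at 0 within {0..1})"
  proof -
    have "((\<lambda>s. A2 (x + s *\<^sub>R e1)) has_vector_derivative A2' x e1) (at 0)"
      by (rule line_deriv) (simp add: d2)
    from has_vector_derivative_diff[OF this has_vector_derivative_const[of "A2 (p 0 0)"]]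
    have "((\<lambda>s. A2 (p s 0) - A2 (p 0 0)) has_vector_derivative A2' x e1) (at 0)"
      by (simp add: p_def)
    then show ?thesis by (rule has_vector_derivative_at_within)
  qed
  have cg: "continuous_on {0..1} (\<lambda>\<tau>. A1' (p \<tau> 0) e2)"
    by (rule continuous_on_compose2[OF c1[of e2]]) (auto intro!: cp continuous_intros)
  have g2: "((\<lambda>s. integral {0..s} (\<lambda>\<tau>. A1' (p \<tau> 0) e2)) has_vector_derivative A1' (p 0 0) e2) (at 0 within {0..1})"
    by (rule integral_has_vector_derivative[OF cg]) simp
  have g2': "((\<lambda>s. A2 (p s 0) - A2 (p 0 0)) has_vector_derivative A1' (p 0 0) e2) (at 0 within {0..1})"
    by (rule has_vector_derivative_transform[OF _ _ g2]) (auto simp: IB)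
  have "A2' x e1 = A1' (p 0 0) e2"
    by (rule vector_derivative_unique_within_closed_interval[of 0 1 0, OF _ _ g1[unfolded cbox_interval[symmetric]] g2'[unfolded cbox_interval[symmetric]]]) auto
  then show ?thesis by (simp add: p_def e1_def e2_def)
qed



lemma line_deriv_c:
  assumes d: "\<And>z. (A has_derivative A' z) (at z)"
  shows "((\<lambda>t. A (y + (c * t) *\<^sub>R v)) has_vector_derivative c *\<^sub>R A' (y + (c * t0) *\<^sub>R v) v) (at t0)"
proof -
  have "((\<lambda>t. A (y + t *\<^sub>R (c *\<^sub>R v))) has_vector_derivative A' (y + t0 *\<^sub>R (c *\<^sub>R v)) (c *\<^sub>R v)) (at t0)"
    by (rule line_deriv[OF d])
  moreover have "A' z (c *\<^sub>R v) = c *\<^sub>R A' z v" for z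
    using has_derivative_bounded_linear[OF d[of z]] by (simp add: linear_simps)
  ultimately show ?thesis by (simp add: mult.commute)
qed

lemma cont_of_deriv:
  assumes d: "\<And>z. (A has_derivative A' z) (at z)"
  shows "continuous_on UNIV A"
  using d by (meson continuous_at_imp_continuous_on differentiableI differentiable_imp_continuous_within)

lemma shift0:
  assumes "(f has_vector_derivative D) (at a)"
  shows "((\<lambda>t. f (a + t)) has_vector_derivative D) (at 0)"
proof -
  have d: "((\<lambda>t::real. a + t) has_vector_derivative 1) (at 0)"
    by (auto intro!: derivative_eq_intros)
  have "((f \<circ> (\<lambda>t. a + t)) has_vector_derivative (1 *\<^sub>R D)) (at 0)"
    by (rule vector_diff_chain_at[OF d]) (simp add: assms)
  then show ?thesis by (simp add: o_def)
qed


lemma KD: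
  fixes A :: "real^3 \<Rightarrow> 'v::euclidean_space"
  assumes d: "\<And>z. (A has_derivative A' z) (at z)" and c: "\<And>v. continuous_on UNIV (\<lambda>z. A' z v)"
  shows "((\<lambda>s. integral {0..1} (\<lambda>r. s *\<^sub>R A (y + (r * s) *\<^sub>R v))) has_vector_derivative A (y + s0 *\<^sub>R v)) (at s0)"
proof -
  have contA: "continuous_on UNIV A" by (rule cont_of_deriv[OF d])
  define fx where "fx s r = A (y + (r * s) *\<^sub>R v) + (s * r) *\<^sub>R A' (y + (r * s) *\<^sub>R v) v" for s r
  have R: "((\<lambda>s. integral (cbox 0 1) (\<lambda>r. s *\<^sub>R A (y + (r * s) *\<^sub>R v))) has_vector_derivative
            integral (cbox 0 1) (fx s0)) (at s0 within UNIV)"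
  proof (rule leibniz_rule_vector_derivative[where fx=fx])
    fix s r :: real
    have "((\<lambda>s. A (y + (r * s) *\<^sub>R v)) has_vector_derivative r *\<^sub>R A' (y + (r * s) *\<^sub>R v) v) (at s)"
      by (rule line_deriv_c[OF d])
    from has_vector_derivative_scaleR[OF DERIV_ident this]
    show "((\<lambda>s. s *\<^sub>R A (y + (r * s) *\<^sub>R v)) has_vector_derivative fx s r) (at s within UNIV)"
      by (rule has_vector_derivative_eq_rhs) (simp add: fx_def algebra_simps)
  next
    fix s :: real
    show "(\<lambda>r. s *\<^sub>R A (y + (r * s) *\<^sub>R v)) integrable_on cbox 0 1"
      by (rule integrable_continuous) (intro continuous_intros continuous_on_compose2[OF contA], auto)
  next
    have "continuous_on (UNIV \<times> cbox 0 1) (\<lambda>z. fx (fst z) (snd z))"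
      unfolding fx_def
      by (intro continuous_intros continuous_on_compose2[OF contA] continuous_on_compose2[OF c])
         (auto intro: continuous_on_fst[OF continuous_on_id] continuous_on_snd[OF continuous_on_id])
    then show "continuous_on (UNIV \<times> cbox 0 1) (\<lambda>(s, r). fx s r)" by (simp add: split_beta)
  qed auto
  have "((\<lambda>r. r *\<^sub>R A (y + (s0 * r) *\<^sub>R v)) has_vector_derivative fx s0 r) (at r within {0..1})" for r
  proof -
    have "((\<lambda>r. A (y + (s0 * r) *\<^sub>R v)) has_vector_derivative s0 *\<^sub>R A' (y + (s0 * r) *\<^sub>R v) v) (at r)"
      by (rule line_deriv_c[OF d])
    from has_vector_derivative_scaleR[OF DERIV_ident this]
    show ?thesis
      by (rule has_vector_derivative_at_within[OF has_vector_derivative_eq_rhs]) (simp add: fx_def algebra_simps)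
  qed
  then have "(fx s0 has_integral (1 *\<^sub>R A (y + (s0 * 1) *\<^sub>R v) - 0 *\<^sub>R A (y + (s0 * 0) *\<^sub>R v))) {0..1}"
    by (intro fundamental_theorem_of_calculus) auto
  then have "integral {0..1} (fx s0) = A (y + s0 *\<^sub>R v)" by (simp add: integral_unique)
  with R show ?thesis by simp
qed

lemma KD2:
  fixes A1 A2 :: "real^3 \<Rightarrow> 'v::euclidean_space"
  assumes d1: "\<And>z. (A1 has_derivative A1' z) (at z)" and d2: "\<And>z. (A2 has_derivative A2' z) (at z)"
    and c1: "\<And>v. continuous_on UNIV (\<lambda>z. A1' z v)" and c2: "\<And>v. continuous_on UNIV (\<lambda>z. A2' z v)"
    and closed: "\<And>z. A2' z u = A1' z w"
  shows "((\<lambda>s. integral {0..1} (\<lambda>r. c *\<^sub>R A2 (y + s *\<^sub>R u + (r * c) *\<^sub>R w))) has_vector_derivative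
           (A1 (y + s0 *\<^sub>R u + c *\<^sub>R w) - A1 (y + s0 *\<^sub>R u))) (at s0)"
proof -
  have contA1: "continuous_on UNIV A1" by (rule cont_of_deriv[OF d1])
  have contA2: "continuous_on UNIV A2" by (rule cont_of_deriv[OF d2])
  define fx where "fx s r = c *\<^sub>R A2' (y + s *\<^sub>R u + (r * c) *\<^sub>R w) u" for s r
  have R: "((\<lambda>s. integral (cbox 0 1) (\<lambda>r. c *\<^sub>R A2 (y + s *\<^sub>R u + (r * c) *\<^sub>R w))) has_vector_derivative
            integral (cbox 0 1) (fx s0)) (at s0 within UNIV)"
  proof (rule leibniz_rule_vector_derivative[where fx=fx])
    fix s r :: real
    have "((\<lambda>s. A2 ((y + (r * c) *\<^sub>R w) + (1 * s) *\<^sub>R u)) has_vector_derivative 1 *\<^sub>R A2' ((y + (r * c) *\<^sub>R w) + (1 * s) *\<^sub>R u) u) (at s)"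
      by (rule line_deriv_c[OF d2])
    from has_vector_derivative_scaleR[OF DERIV_const this]
    have "((\<lambda>s. c *\<^sub>R A2 ((y + (r * c) *\<^sub>R w) + (1 * s) *\<^sub>R u)) has_vector_derivative fx s r) (at s)"
      by (rule has_vector_derivative_eq_rhs) (simp add: fx_def algebra_simps)
    then show "((\<lambda>s. c *\<^sub>R A2 (y + s *\<^sub>R u + (r * c) *\<^sub>R w)) has_vector_derivative fx s r) (at s within UNIV)"
      by (simp add: ac_simps)
  next
    fix s :: real
    show "(\<lambda>r. c *\<^sub>R A2 (y + s *\<^sub>R u + (r * c) *\<^sub>R w)) integrable_on cbox 0 1"
      by (rule integrable_continuous) (intro continuous_intros continuous_on_compose2[OF contA2], auto)
  next
    have "continuous_on (UNIV \<times> cbox 0 1) (\<lambda>z. fx (fst z) (snd z))"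
      unfolding fx_def
      by (intro continuous_intros continuous_on_compose2[OF c2])
         (auto intro: continuous_on_fst[OF continuous_on_id] continuous_on_snd[OF continuous_on_id])
    then show "continuous_on (UNIV \<times> cbox 0 1) (\<lambda>(s, r). fx s r)" by (simp add: split_beta)
  qed auto
  have "((\<lambda>r. A1 ((y + s0 *\<^sub>R u) + (c * r) *\<^sub>R w)) has_vector_derivative fx s0 r) (at r within {0..1})" for r
  proof -
    have "((\<lambda>r. A1 ((y + s0 *\<^sub>R u) + (c * r) *\<^sub>R w)) has_vector_derivative c *\<^sub>R A1' ((y + s0 *\<^sub>R u) + (c * r) *\<^sub>R w) w) (at r)"
      by (rule line_deriv_c[OF d1])
    then show ?thesis
      by (rule has_vector_derivative_at_within[OF has_vector_derivative_eq_rhs]) (simp add: fx_def closed mult.commute)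
  qed
  then have "(fx s0 has_integral (A1 ((y + s0 *\<^sub>R u) + (c * 1) *\<^sub>R w) - A1 ((y + s0 *\<^sub>R u) + (c * 0) *\<^sub>R w))) {0..1}"
    by (intro fundamental_theorem_of_calculus) auto
  then have "integral {0..1} (fx s0) = A1 (y + s0 *\<^sub>R u + c *\<^sub>R w) - A1 (y + s0 *\<^sub>R u)"
    by (simp add: integral_unique)
  with R show ?thesis by simp
qed




lemma subsp_integral:
  fixes f :: "real \<Rightarrow> 'a::euclidean_space"
  assumes S: "subspace S" and f: "\<And>t. f t \<in> S" and c: "continuous_on {a..b} f"
  shows "integral {a..b} f \<in> S"
proof -
  obtain p z where p: "p \<in> span S" and z: "\<And>w. w \<in> span S \<Longrightarrow> orthogonal z w" and yz: "integral {a..b} f = p + z"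
    using orthogonal_subspace_decomp_exists[of S "integral {a..b} f"] by metis
  have i: "f integrable_on {a..b}" using c integrable_continuous_real by blast
  have sS: "span S = S" using S by (simp add: span_eq_iff)
  have "integral {a..b} ((\<lambda>v. z \<bullet> v) \<circ> f) = z \<bullet> integral {a..b} f"
    by (rule integral_linear[OF i bounded_linear_inner_right])
  moreover have "integral {a..b} ((\<lambda>v. z \<bullet> v) \<circ> f) = integral {a..b} (\<lambda>_. 0::real)"
    using z f sS by (intro integral_cong) (auto simp: orthogonal_def)
  ultimately have "z \<bullet> integral {a..b} f = 0" by simp
  moreover have "z \<bullet> p = 0" using z[OF p] by (simp add: orthogonal_def)
  ultimately have "z \<bullet> z = 0" using yz by (simp add: inner_add_right)
  then have "z = 0" by simp
  then show ?thesis using yz p sS by simp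
qed

lemma potential:
  fixes A1 A2 :: "real^3 \<Rightarrow> 'v::euclidean_space"
  assumes d1: "\<And>z. (A1 has_derivative A1' z) (at z)" and d2: "\<And>z. (A2 has_derivative A2' z) (at z)"
    and c1: "\<And>v. continuous_on UNIV (\<lambda>z. A1' z v)" and c2: "\<And>v. continuous_on UNIV (\<lambda>z. A2' z v)"
    and closed: "\<And>z. A2' z (axis 1 1) = A1' z (axis 2 1)"
    and S: "subspace S" and S1: "\<And>z. A1 z \<in> S" and S2: "\<And>z. A2 z \<in> S"
  shows "\<exists>F. (\<forall>x. F x \<in> S) \<and> (\<forall>x. has_partial 1 F x (A1 x) \<and> has_partial 2 F x (A2 x))"
proof -
  define e1 :: "real^3" where "e1 = axis 1 1"
  define e2 :: "real^3" where "e2 = axis 2 1"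
  define b where "b x = x - (x$1) *\<^sub>R e1 - (x$2) *\<^sub>R e2" for x :: "real^3"
  define K1 where "K1 y s = integral {0..1} (\<lambda>r. s *\<^sub>R A1 (y + (r * s) *\<^sub>R e1))" for y s
  define K2 where "K2 y s c = integral {0..1} (\<lambda>r. c *\<^sub>R A2 (y + s *\<^sub>R e1 + (r * c) *\<^sub>R e2))" for y s c
  define F where "F x = K1 (b x) (x$1) + K2 (b x) (x$1) (x$2)" for x
  have contA1: "continuous_on UNIV A1" by (rule cont_of_deriv[OF d1])
  have contA2: "continuous_on UNIV A2" by (rule cont_of_deriv[OF d2])
  have n21: "(2::3) \<noteq> 1" by simp
  have e1c: "e1 $ 1 = 1" "e1 $ 2 = 0" and e2c: "e2 $ 1 = 0" "e2 $ 2 = 1"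
    using n21 by (auto simp: e1_def e2_def axis_def)
  have bx: "b x + (x$1) *\<^sub>R e1 + (x$2) *\<^sub>R e2 = x" for x by (simp add: b_def)
  have b1: "b (x + t *\<^sub>R e1) = b x" for x t
    by (simp add: b_def e1c e2c algebra_simps)
  have b2: "b (x + t *\<^sub>R e2) = b x" for x t
    by (simp add: b_def e1c e2c algebra_simps)
  have FS: "F x \<in> S" for x
  proof -
    have "K1 y s \<in> S" for y s unfolding K1_def
      by (rule subsp_integral[OF S]) (auto intro!: subspace_scale[OF S] S1 continuous_intros continuous_on_compose2[OF contA1])
    moreover have "K2 y s c \<in> S" for y s c unfolding K2_def
      by (rule subsp_integral[OF S]) (auto intro!: subspace_scale[OF S] S2 continuous_intros continuous_on_compose2[OF contA2])
    ultimately show ?thesis unfolding F_def by (intro subspace_add[OF S])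
  qed
  have P1: "has_partial 1 F x (A1 x)" for x
  proof -
    have k1: "((\<lambda>s. K1 (b x) s) has_vector_derivative A1 (b x + (x$1) *\<^sub>R e1)) (at (x$1))"
      unfolding K1_def by (rule KD[OF d1 c1])
    have k2: "((\<lambda>s. K2 (b x) s (x$2)) has_vector_derivative
        (A1 (b x + (x$1) *\<^sub>R e1 + (x$2) *\<^sub>R e2) - A1 (b x + (x$1) *\<^sub>R e1))) (at (x$1))"
      unfolding K2_def by (rule KD2[OF d1 d2 c1 c2]) (simp add: closed e1_def e2_def)
    have "((\<lambda>t. K1 (b x) (x$1 + t) + K2 (b x) (x$1 + t) (x$2)) has_vector_derivative
        (A1 (b x + (x$1) *\<^sub>R e1) + (A1 (b x + (x$1) *\<^sub>R e1 + (x$2) *\<^sub>R e2) - A1 (b x + (x$1) *\<^sub>R e1)))) (at 0)"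
      by (rule has_vector_derivative_add[OF shift0[OF k1] shift0[OF k2]])
    moreover have "F (x + t *\<^sub>R e1) = K1 (b x) (x$1 + t) + K2 (b x) (x$1 + t) (x$2)" for t
      by (simp add: F_def b1 e1c)
    ultimately show ?thesis unfolding has_partial_def using bx[of x] by (simp add: e1_def)
  qed
  have P2: "has_partial 2 F x (A2 x)" for x
  proof -
    have k2: "((\<lambda>c. integral {0..1} (\<lambda>r. c *\<^sub>R A2 ((b x + (x$1) *\<^sub>R e1) + (r * c) *\<^sub>R e2))) has_vector_derivative
        A2 ((b x + (x$1) *\<^sub>R e1) + (x$2) *\<^sub>R e2)) (at (x$2))"
      by (rule KD[OF d2 c2])
    then have k2': "((\<lambda>c. K2 (b x) (x$1) c) has_vector_derivative A2 x) (at (x$2))"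
      unfolding K2_def using bx[of x] by simp
    have "((\<lambda>t. K1 (b x) (x$1) + K2 (b x) (x$1) (x$2 + t)) has_vector_derivative (0 + A2 x)) (at 0)"
      by (rule has_vector_derivative_add[OF has_vector_derivative_const shift0[OF k2']])
    moreover have "F (x + t *\<^sub>R e2) = K1 (b x) (x$1) + K2 (b x) (x$1) (x$2 + t)" for t
      by (simp add: F_def b2 e2c)
    ultimately show ?thesis unfolding has_partial_def by (simp add: e2_def)
  qed
  show ?thesis using FS P1 P2 by blast
qed



lemma mm_distrib:
  fixes A B C :: "'n::finite cmat"
  shows "(A + B) ** C = A ** C + B ** C" "A ** (B + C) = A ** B + A ** C"
    "(A - B) ** C = A ** C - B ** C" "A ** (B - C) = A ** B - A ** C"
    "(- A) ** B = - (A ** B)" "A ** (- B) = - (A ** B)"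
  using bounded_bilinear.add_left[OF bb_mm] bounded_bilinear.add_right[OF bb_mm]
    bounded_bilinear.diff_left[OF bb_mm] bounded_bilinear.diff_right[OF bb_mm]
    bounded_bilinear.minus_left[OF bb_mm] bounded_bilinear.minus_right[OF bb_mm]
  by auto

lemma key_alg:
  fixes W P Q1 Q2 u1 u2 dQ1 dQ2 :: "'n::finite cmat"
  assumes PW: "P ** W = mat 1"
  shows "((W ** Q1) ** (u2 ** P) + (W ** dQ1 + (- (W ** ((u2 ** P) ** W))) ** Q1) ** P)
      - ((W ** Q2) ** (u1 ** P) + (W ** dQ2 + (- (W ** ((u1 ** P) ** W))) ** Q2) ** P)
      = W ** (dQ1 - dQ2 + lie_bracket Q1 u2 + lie_bracket u1 Q2) ** P"
proof -
  have c: "(X ** P) ** W = X" for X by (simp add: matrix_mul_assoc[symmetric] PW)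
  show ?thesis
    by (simp add: lie_bracket_def mm_distrib matrix_mul_assoc c algebra_simps)
qed


lemma C1_deriv: "C1 f \<Longrightarrow> (f has_derivative frechet_derivative f (at x)) (at x)"
  unfolding C1_def using frechet_derivative_works by blast

lemma C1_cont: "C1 f \<Longrightarrow> continuous_on UNIV (\<lambda>x. frechet_derivative f (at x) v)"
  unfolding C1_def by (auto intro: continuous_on_product_then_coordinatewise)

lemma hp_of: "(f has_derivative f') (at x) \<Longrightarrow> has_partial i f x (f' (axis i 1))"
  unfolding has_partial_def using line_deriv[of f f' x 0 "axis i 1"] by simp

lemma partial_of: "(f has_derivative f') (at x) \<Longrightarrow> partial i f x = f' (axis i 1)"
  unfolding partial_def using line_deriv[of f f' x 0 "axis i 1"] vector_derivative_at by simp

lemma hp_mm: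
  fixes f g :: "real^3 \<Rightarrow> 'n::finite cmat"
  assumes "has_partial i f x A" "has_partial i g x B"
  shows "has_partial i (\<lambda>x. f x ** g x) x (f x ** B + A ** g x)"
  using bounded_bilinear.has_vector_derivative[OF bb_mm assms[unfolded has_partial_def]]
  unfolding has_partial_def by simp

lemma cont_mm:
  fixes f g :: "'a::topological_space \<Rightarrow> 'n::finite cmat"
  shows "continuous_on S f \<Longrightarrow> continuous_on S g \<Longrightarrow> continuous_on S (\<lambda>x. f x ** g x)"
  by (rule bounded_bilinear.continuous_on[OF bb_mm])

lemma deriv_mm:
  fixes f g :: "'a::real_normed_vector \<Rightarrow> 'n::finite cmat"
  shows "(f has_derivative f') (at x) \<Longrightarrow> (g has_derivative g') (at x) \<Longrightarrow>
    ((\<lambda>x. f x ** g x) has_derivative (\<lambda>h. f x ** g' h + f' h ** g x)) (at x)"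
  by (rule bounded_bilinear.FDERIV[OF bb_mm])

lemma mm_zero:
  fixes A :: "'n::finite cmat"
  shows "A ** 0 = 0" "0 ** A = 0"
  using bounded_bilinear.zero_left[OF bb_mm] bounded_bilinear.zero_right[OF bb_mm] by auto

theorem proposition1:
  fixes G :: "'n::finite cmat set"
    and u1 u2 \<Phi> Q1 Q2 :: "real^3 \<Rightarrow> 'n cmat"
  assumes G: "matrix_Lie_group G"
    and u_g: "\<forall>x. u1 x \<in> lie_algebra G \<and> u2 x \<in> lie_algebra G"
    and u_C1: "C1 u1" "C1 u2"
    and Delta: "\<forall>x. partial 2 u1 x - partial 1 u2 x + lie_bracket (u1 x) (u2 x) = 0"
    and \<Phi>_G: "\<forall>x. \<Phi> x \<in> G"
    and \<Phi>_C1: "C1 \<Phi>"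
    and LSP: "\<forall>x. partial 1 \<Phi> x = u1 x ** \<Phi> x \<and> partial 2 \<Phi> x = u2 x ** \<Phi> x"
    and Q_g: "\<forall>x. Q1 x \<in> lie_algebra G \<and> Q2 x \<in> lie_algebra G"
    and Q_C1: "C1 Q1" "C1 Q2"
  shows
   "(sym_condition u1 u2 Q1 Q2
      \<longleftrightarrow> (\<exists>F. (\<forall>x. F x \<in> lie_algebra G) \<and>
               (\<forall>x. has_partial 1 F x (matrix_inv (\<Phi> x) ** Q1 x ** \<Phi> x) \<and>
                    has_partial 2 F x (matrix_inv (\<Phi> x) ** Q2 x ** \<Phi> x))))
    \<and> (sym_condition u1 u2 Q1 Q2
      \<longleftrightarrow> (\<exists>\<Psi>. sym_condition u1 u2 Q1 Q2 \<and>
               (\<forall>x. matrix_inv (\<Phi> x) ** \<Psi> x \<in> lie_algebra G) \<and>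
               (\<forall>x. has_partial 1 \<Psi> x (u1 x ** \<Psi> x + Q1 x ** \<Phi> x) \<and>
                    has_partial 2 \<Psi> x (u2 x ** \<Psi> x + Q2 x ** \<Phi> x))))
    \<and> (\<forall>F. ((\<forall>x. F x \<in> lie_algebra G) \<and>
               (\<forall>x. has_partial 1 F x (matrix_inv (\<Phi> x) ** Q1 x ** \<Phi> x) \<and>
                    has_partial 2 F x (matrix_inv (\<Phi> x) ** Q2 x ** \<Phi> x)))
         \<longrightarrow> (let \<Psi> = (\<lambda>x. \<Phi> x ** F x) in
               sym_condition u1 u2 Q1 Q2 \<and>
               (\<forall>x. matrix_inv (\<Phi> x) ** \<Psi> x \<in> lie_algebra G) \<and>
               (\<forall>x. has_partial 1 \<Psi> x (u1 x ** \<Psi> x + Q1 x ** \<Phi> x) \<and>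
                    has_partial 2 \<Psi> x (u2 x ** \<Psi> x + Q2 x ** \<Phi> x))))
    \<and> (\<forall>\<Psi>. (sym_condition u1 u2 Q1 Q2 \<and>
               (\<forall>x. matrix_inv (\<Phi> x) ** \<Psi> x \<in> lie_algebra G) \<and>
               (\<forall>x. has_partial 1 \<Psi> x (u1 x ** \<Psi> x + Q1 x ** \<Phi> x) \<and>
                    has_partial 2 \<Psi> x (u2 x ** \<Psi> x + Q2 x ** \<Phi> x)))
         \<longrightarrow> (let F = (\<lambda>x. matrix_inv (\<Phi> x) ** \<Psi> x) in
               (\<forall>x. F x \<in> lie_algebra G) \<and>
               (\<forall>x. has_partial 1 F x (matrix_inv (\<Phi> x) ** Q1 x ** \<Phi> x) \<and>
                    has_partial 2 F x (matrix_inv (\<Phi> x) ** Q2 x ** \<Phi> x))))"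
  proof -
  define W where "W x = matrix_inv (\<Phi> x)" for x
  define \<Phi>' where "\<Phi>' x = frechet_derivative \<Phi> (at x)" for x
  define Q1' where "Q1' x = frechet_derivative Q1 (at x)" for x
  define Q2' where "Q2' x = frechet_derivative Q2 (at x)" for x
  have d\<Phi>: "(\<Phi> has_derivative \<Phi>' x) (at x)" for x using C1_deriv[OF \<Phi>_C1] by (simp add: \<Phi>'_def)
  have dQ1: "(Q1 has_derivative Q1' x) (at x)" for x using C1_deriv[OF Q_C1(1)] by (simp add: Q1'_def)
  have dQ2: "(Q2 has_derivative Q2' x) (at x)" for x using C1_deriv[OF Q_C1(2)] by (simp add: Q2'_def)
  have c\<Phi>': "continuous_on UNIV (\<lambda>x. \<Phi>' x v)" for v using C1_cont[OF \<Phi>_C1] by (simp add: \<Phi>'_def)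
  have cQ1': "continuous_on UNIV (\<lambda>x. Q1' x v)" for v using C1_cont[OF Q_C1(1)] by (simp add: Q1'_def)
  have cQ2': "continuous_on UNIV (\<lambda>x. Q2' x v)" for v using C1_cont[OF Q_C1(2)] by (simp add: Q2'_def)
  have inv: "invertible (\<Phi> x)" for x using G \<Phi>_G unfolding matrix_Lie_group_def by auto
  have WP: "W x ** \<Phi> x = mat 1" and PW: "\<Phi> x ** W x = mat 1" for x
    using matrix_inv_lr[OF inv] by (simp_all add: W_def)
  have cont\<Phi>: "continuous_on UNIV \<Phi>" by (rule cont_of_deriv[OF d\<Phi>])
  have contQ1: "continuous_on UNIV Q1" by (rule cont_of_deriv[OF dQ1])
  have contQ2: "continuous_on UNIV Q2" by (rule cont_of_deriv[OF dQ2])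
  have contW: "continuous_on UNIV W" unfolding W_def by (rule cont_matrix_inv[OF cont\<Phi> inv])
  define Wd where "Wd x v = - (W x ** (\<Phi>' x v ** W x))" for x v
  have dW: "(W has_derivative Wd x) (at x)" for x
    unfolding Wd_def
    by (rule inv_has_derivative[OF d\<Phi> _ WP PW]) (use contW in \<open>simp add: continuous_on_eq_continuous_at\<close>)
  have cWd: "continuous_on UNIV (\<lambda>x. Wd x v)" for v
    unfolding Wd_def by (intro continuous_on_minus cont_mm contW c\<Phi>')
  have LSP1: "\<Phi>' x (axis 1 1) = u1 x ** \<Phi> x" and LSP2: "\<Phi>' x (axis 2 1) = u2 x ** \<Phi> x" for x
    using LSP partial_of[OF d\<Phi>] by metis+
  have pQ1: "partial 2 Q1 x = Q1' x (axis 2 1)" and pQ2: "partial 1 Q2 x = Q2' x (axis 1 1)" for x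
    using partial_of[OF dQ1] partial_of[OF dQ2] by auto
  define A1 where "A1 = (\<lambda>x. W x ** Q1 x ** \<Phi> x)"
  define A2 where "A2 = (\<lambda>x. W x ** Q2 x ** \<Phi> x)"
  have A1e: "A1 x = matrix_inv (\<Phi> x) ** Q1 x ** \<Phi> x" and A2e: "A2 x = matrix_inv (\<Phi> x) ** Q2 x ** \<Phi> x" for x
    by (simp_all add: A1_def A2_def W_def)
  define A1' where "A1' = (\<lambda>x v. (W x ** Q1 x) ** \<Phi>' x v + (W x ** Q1' x v + Wd x v ** Q1 x) ** \<Phi> x)"
  define A2' where "A2' = (\<lambda>x v. (W x ** Q2 x) ** \<Phi>' x v + (W x ** Q2' x v + Wd x v ** Q2 x) ** \<Phi> x)"
  have dA1: "(A1 has_derivative A1' x) (at x)" for x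
    unfolding A1_def A1'_def by (rule deriv_mm[OF deriv_mm[OF dW dQ1] d\<Phi>])
  have dA2: "(A2 has_derivative A2' x) (at x)" for x
    unfolding A2_def A2'_def by (rule deriv_mm[OF deriv_mm[OF dW dQ2] d\<Phi>])
  have cA1: "continuous_on UNIV (\<lambda>x. A1' x v)" for v
    unfolding A1'_def by (intro continuous_on_add cont_mm contW contQ1 cont\<Phi> cQ1' c\<Phi>' cWd)
  have cA2: "continuous_on UNIV (\<lambda>x. A2' x v)" for v
    unfolding A2'_def by (intro continuous_on_add cont_mm contW contQ2 cont\<Phi> cQ2' c\<Phi>' cWd)
  have key1: "A1' x (axis 2 1) - A2' x (axis 1 1) = W x ** (partial 2 Q1 x - partial 1 Q2 x
      + lie_bracket (Q1 x) (u2 x) + lie_bracket (u1 x) (Q2 x)) ** \<Phi> x" for x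
    unfolding A1'_def A2'_def Wd_def pQ1 pQ2 LSP1 LSP2 by (rule key_alg[OF PW])
  have symiff: "sym_condition u1 u2 Q1 Q2 \<longleftrightarrow> (\<forall>x. A2' x (axis 1 1) = A1' x (axis 2 1))"
  proof
    assume sc: "sym_condition u1 u2 Q1 Q2"
    show "\<forall>x. A2' x (axis 1 1) = A1' x (axis 2 1)"
    proof
      fix x
      have "A1' x (axis 2 1) - A2' x (axis 1 1) = 0"
        using key1[of x] sc unfolding sym_condition_def by (simp add: mm_zero)
      then show "A2' x (axis 1 1) = A1' x (axis 2 1)" by simp
    qed
  next
    assume h: "\<forall>x. A2' x (axis 1 1) = A1' x (axis 2 1)"
    show "sym_condition u1 u2 Q1 Q2"
      unfolding sym_condition_def
    proof
      fix x
      define S where "S = partial 2 Q1 x - partial 1 Q2 x + lie_bracket (Q1 x) (u2 x) + lie_bracket (u1 x) (Q2 x)"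
      have z: "W x ** S ** \<Phi> x = 0" using key1[of x] h by (simp add: S_def)
      have "S = ((\<Phi> x ** W x) ** S) ** (\<Phi> x ** W x)" by (simp add: PW)
      also have "\<dots> = \<Phi> x ** (W x ** S ** \<Phi> x) ** W x" by (simp add: matrix_mul_assoc)
      also have "\<dots> = 0" by (simp add: z mm_zero)
      finally show "S = 0" .
    qed
  qed
  have LA1: "A1 x \<in> lie_algebra G" and LA2: "A2 x \<in> lie_algebra G" for x
    unfolding A1e A2e using la_Ad[OF G _ \<Phi>_G[rule_format]] Q_g by auto
  define PF where "PF F \<longleftrightarrow> (\<forall>x. F x \<in> lie_algebra G) \<and>
               (\<forall>x. has_partial 1 F x (matrix_inv (\<Phi> x) ** Q1 x ** \<Phi> x) \<and>
                    has_partial 2 F x (matrix_inv (\<Phi> x) ** Q2 x ** \<Phi> x))" for F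
  define PP where "PP \<Psi> \<longleftrightarrow> sym_condition u1 u2 Q1 Q2 \<and>
               (\<forall>x. matrix_inv (\<Phi> x) ** \<Psi> x \<in> lie_algebra G) \<and>
               (\<forall>x. has_partial 1 \<Psi> x (u1 x ** \<Psi> x + Q1 x ** \<Phi> x) \<and>
                    has_partial 2 \<Psi> x (u2 x ** \<Psi> x + Q2 x ** \<Phi> x))" for \<Psi>
  have F_sym: "sym_condition u1 u2 Q1 Q2" if "PF F" for F
  proof -
    have "A1' x (axis 2 1) = A2' x (axis 1 1)" for x
      by (rule schwarz[of F A1 A2 A1' A2', OF _ _ dA1 dA2 cA1]) (use that in \<open>auto simp: PF_def A1e A2e\<close>)
    then show ?thesis using symiff by auto
  qed
  have sym_F: "\<exists>F. PF F" if sc: "sym_condition u1 u2 Q1 Q2"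
  proof -
    have closed: "A2' z (axis 1 1) = A1' z (axis 2 1)" for z using sc symiff by auto
    from potential[OF dA1 dA2 cA1 cA2 closed la_subspace[OF G] LA1 LA2]
    obtain F where "\<forall>x. F x \<in> lie_algebra G" "\<forall>x. has_partial 1 F x (A1 x) \<and> has_partial 2 F x (A2 x)"
      by blast
    then have "PF F" by (simp add: PF_def A1e A2e)
    then show ?thesis by blast
  qed
  have F_Psi: "PP (\<lambda>x. \<Phi> x ** F x)" if "PF F" for F
  proof -
    have hp: "has_partial i (\<lambda>x. \<Phi> x ** F x) x (a ** (\<Phi> x ** F x) + Q ** \<Phi> x)"
      if l: "\<Phi>' x (axis i 1) = a ** \<Phi> x" and f: "has_partial i F x (W x ** Q ** \<Phi> x)" for i x a Q
    proof -
      have "has_partial i (\<lambda>x. \<Phi> x ** F x) x (\<Phi> x ** (W x ** Q ** \<Phi> x) + \<Phi>' x (axis i 1) ** F x)"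
        by (rule hp_mm[OF hp_of[OF d\<Phi>] f])
      moreover have "\<Phi> x ** (W x ** Q ** \<Phi> x) + \<Phi>' x (axis i 1) ** F x = a ** (\<Phi> x ** F x) + Q ** \<Phi> x"
        by (simp add: l matrix_mul_assoc PW)
      ultimately show ?thesis by simp
    qed
    have "matrix_inv (\<Phi> x) ** (\<Phi> x ** F x) = F x" for x
      using WP[of x] by (simp add: W_def matrix_mul_assoc)
    then show ?thesis using that F_sym[OF that] hp[OF LSP1] hp[OF LSP2]
      by (auto simp: PP_def PF_def W_def)
  qed
  have Psi_F: "PF (\<lambda>x. matrix_inv (\<Phi> x) ** \<Psi> x)" if "PP \<Psi>" for \<Psi>
  proof -
    have hp: "has_partial i (\<lambda>x. W x ** \<Psi> x) x (W x ** Q ** \<Phi> x)"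
      if l: "\<Phi>' x (axis i 1) = a ** \<Phi> x" and f: "has_partial i \<Psi> x (a ** \<Psi> x + Q ** \<Phi> x)" for i x a Q
    proof -
      have "has_partial i (\<lambda>x. W x ** \<Psi> x) x (W x ** (a ** \<Psi> x + Q ** \<Phi> x) + Wd x (axis i 1) ** \<Psi> x)"
        by (rule hp_mm[OF hp_of[OF dW] f])
      moreover have "W x ** (a ** \<Psi> x + Q ** \<Phi> x) + Wd x (axis i 1) ** \<Psi> x = W x ** Q ** \<Phi> x"
      proof -
        have c: "(X ** \<Phi> x) ** W x = X" for X by (simp add: matrix_mul_assoc[symmetric] PW)
        show ?thesis by (simp add: Wd_def l mm_distrib matrix_mul_assoc c)
      qed
      ultimately show ?thesis by simp
    qed
    show ?thesis using that hp[OF LSP1] hp[OF LSP2]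
      by (auto simp: PP_def PF_def W_def)
  qed
  have part1: "sym_condition u1 u2 Q1 Q2 \<longleftrightarrow> (\<exists>F. PF F)" using F_sym sym_F by blast
  have part2: "sym_condition u1 u2 Q1 Q2 \<longleftrightarrow> (\<exists>\<Psi>. PP \<Psi>)"
  proof
    assume "sym_condition u1 u2 Q1 Q2"
    then obtain F where "PF F" using part1 by blast
    then show "\<exists>\<Psi>. PP \<Psi>" using F_Psi by blast
  next
    assume "\<exists>\<Psi>. PP \<Psi>"
    then show "sym_condition u1 u2 Q1 Q2" unfolding PP_def by blast
  qed
  show ?thesis
    using part1 part2 F_Psi Psi_F unfolding PF_def PP_def Let_def by blast
qed

end
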